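(* $$\{\mathbf{M}\mathbf{X}\mathbf{M}^T:\mathbf{X}\in\mathcal{X}\cap\mathcal{H}\}=\left\{\mathbf{Y}\in\mathbb{S}^m:\ \mathrm{Tr}(\mathbf{Y})=1,\ \mathbf{Y}\succeq\tfrac14\mathbf{d}\mathbf{d}^T\text{ where }\mathbf{d}=\mathrm{diag}(\mathbf{Y})\right\}.$$
   Context: $\mathbf{e}$ is the all-ones vector, $\mathbb{S}^{k}$ the real symmetric $k\times k$ matrices, $\mathrm{diag}(\mathbf{Y})$ the vector of diagonal entries. $\mathcal{X}=\{\mathbf{X}\in\mathbb{S}^{m+1}:\mathrm{diag}(\mathbf{X})=\mathbf{e},\mathbf{X}\succeq\mathbf{0}\}$, $\mathbf{M}=[\mathbf{I}_m\ -\mathbf{e}]\in\mathbb{R}^{m\times(m+1)}$, $\mathcal{H}=\{\mathbf{X}\in\mathbb{S}^{m+1}:\mathrm{Tr}(\mathbf{M}\mathbf{X}\mathbf{M}^T)=1\}$. $\mathbf{A}\succeq\mathbf{B}$ means $\mathbf{A}-\mathbf{B}$ is positive semidefinite. *)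

theory Defs
  imports "Jordan_Normal_Form.Matrix"
begin

definition tr :: "real mat \<Rightarrow> real" where
  "tr A = (\<Sum>i<dim_row A. A $$ (i,i))"

definition psd :: "nat \<Rightarrow> real mat \<Rightarrow> bool" where
  "psd n A \<longleftrightarrow> A \<in> carrier_mat n n \<and> A\<^sup>T = A \<and>
     (\<forall>x \<in> carrier_vec n. x \<bullet> (A *\<^sub>v x) \<ge> 0)"

definition diagv :: "real mat \<Rightarrow> real vec" where
  "diagv A = vec (dim_row A) (\<lambda>i. A $$ (i,i))"

definition ellX :: "nat \<Rightarrow> real mat set" where
  "ellX m = {X. psd (m+1) X \<and> diagv X = vec (m+1) (\<lambda>_. 1)}"

definition Mmat :: "nat \<Rightarrow> real mat" where
  "Mmat m = mat m (m+1) (\<lambda>(i,j). if j = m then -1 else if i = j then 1 else 0)"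

definition hypH :: "nat \<Rightarrow> real mat set" where
  "hypH m = {X. X \<in> carrier_mat (m+1) (m+1) \<and> X\<^sup>T = X \<and>
                tr (Mmat m * X * (Mmat m)\<^sup>T) = 1}"

definition loewner_ge :: "nat \<Rightarrow> real mat \<Rightarrow> real mat \<Rightarrow> bool" where
  "loewner_ge n A B \<longleftrightarrow> psd n (A - B)"

definition outer :: "real vec \<Rightarrow> real vec \<Rightarrow> real mat" where
  "outer u v = mat (dim_vec u) (dim_vec v) (\<lambda>(i,j). u $ i * v $ j)"

end

theory Submission imports Defs begin

lemma quad_form:
  assumes "A \<in> carrier_mat n n" "x \<in> carrier_vec n"
  shows "x \<bullet> (A *\<^sub>v x) = (\<Sum>i<n. \<Sum>j<n. x$i * A$$(i,j) * x$j)"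
  using assms
  by (auto simp: scalar_prod_def mult_mat_vec_def row_def sum_distrib_left mult.assoc mult.commute mult.left_commute atLeast0LessThan intro!: sum.cong)

lemma MXM_entry:
  assumes X: "X \<in> carrier_mat (m+1) (m+1)" and i: "i < m" and j: "j < m"
  shows "(Mmat m * X * (Mmat m)\<^sup>T) $$ (i,j) = X$$(i,j) - X$$(i,m) - X$$(m,j) + X$$(m,m)"
proof -
  have c: "Mmat m \<in> carrier_mat m (m+1)" by (simp add: Mmat_def)
  have r: "\<And>k. k < m+1 \<Longrightarrow> (Mmat m * X) $$ (i,k) = X$$(i,k) - X$$(m,k)"
  proof -
    fix k assume k: "k < m+1"
    have "(Mmat m * X) $$ (i,k) = (\<Sum>l<m+1. (if l = m then -1 else if i = l then 1 else 0) * X$$(l,k))"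
      using X i k c by (simp add: scalar_prod_def Mmat_def atLeast0LessThan)
    also have "\<dots> = X$$(i,k) - X$$(m,k)"
      using i by (simp add: lessThan_Suc if_distrib[of "\<lambda>c. c * _"] cong: if_cong)
    finally show "(Mmat m * X) $$ (i,k) = X$$(i,k) - X$$(m,k)" .
  qed
  have "(Mmat m * X * (Mmat m)\<^sup>T) $$ (i,j) = (\<Sum>l<m+1. (Mmat m * X) $$ (i,l) * (if l = m then -1 else if j = l then 1 else 0))"
    using X i j c by (simp add: scalar_prod_def Mmat_def atLeast0LessThan)
  also have "\<dots> = (\<Sum>l<m+1. (X$$(i,l) - X$$(m,l)) * (if l = m then -1 else if j = l then 1 else 0))"
    using r by (intro sum.cong) auto
  also have "\<dots> = X$$(i,j) - X$$(i,m) - X$$(m,j) + X$$(m,m)"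
    using j by (simp add: lessThan_Suc if_distrib[of "\<lambda>c. _ * c"] cong: if_cong)
  finally show ?thesis .
qed

lemma split_quad:
  fixes f :: "nat \<Rightarrow> nat \<Rightarrow> real" and w :: "nat \<Rightarrow> real"
  shows "(\<Sum>i<m+1. \<Sum>j<m+1. w i * f i j * w j) =
    (\<Sum>i<m. \<Sum>j<m. w i * f i j * w j) + w m * (\<Sum>i<m. w i * f i m) + w m * (\<Sum>j<m. f m j * w j) + w m * f m m * w m"
  by (simp add: lessThan_Suc sum.distrib sum_distrib_left sum_distrib_right algebra_simps)

lemma forward:
  assumes X: "X \<in> ellX m" "X \<in> hypH m"
  defines "Y \<equiv> Mmat m * X * (Mmat m)\<^sup>T"
  shows "Y \<in> carrier_mat m m \<and> Y\<^sup>T = Y \<and> tr Y = 1 \<and>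
        (let d = diagv Y in loewner_ge m Y ((1/4) \<cdot>\<^sub>m (outer d d)))"
proof -
  have Xc: "X \<in> carrier_mat (m+1) (m+1)" and XT: "X\<^sup>T = X" and trY: "tr Y = 1"
    using X(2) unfolding hypH_def Y_def by blast+
  have Xs: "\<And>i j. i < m+1 \<Longrightarrow> j < m+1 \<Longrightarrow> X$$(j,i) = X$$(i,j)"
    using XT Xc by (metis carrier_matD(1) carrier_matD(2) index_transpose_mat(1))
  have Xd: "\<And>i. i < m+1 \<Longrightarrow> X$$(i,i) = 1"
  proof -
    fix i assume i: "i < m+1"
    have "diagv X $ i = 1" using X i by (simp add: ellX_def)
    then show "X$$(i,i) = 1" using Xc i by (simp add: diagv_def)
  qed
  have Mc: "Mmat m \<in> carrier_mat m (m+1)" by (simp add: Mmat_def)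
  have Yc: "Y \<in> carrier_mat m m" unfolding Y_def
    by (rule mult_carrier_mat[OF mult_carrier_mat[OF Mc Xc]]) (use Mc in simp)
  have Ye: "\<And>i j. i < m \<Longrightarrow> j < m \<Longrightarrow> Y$$(i,j) = X$$(i,j) - X$$(i,m) - X$$(j,m) + 1"
    using MXM_entry[OF Xc] Xs[of _ m] Xd unfolding Y_def by simp
  have YT: "Y\<^sup>T = Y"
    by (rule eq_matI) (use Yc Ye in \<open>auto simp: Xs[of _ m] intro: Xs\<close>)
  define d where "d = diagv Y"
  have dd: "\<And>i. i < m \<Longrightarrow> d $ i = 2 - 2 * X$$(i,m)"
    using Ye Xd Yc by (simp add: d_def diagv_def)
  have dv: "dim_vec d = m" using Yc by (simp add: d_def diagv_def)
  define B where "B = Y - (1/4) \<cdot>\<^sub>m (outer d d)"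
  have Oc: "outer d d \<in> carrier_mat m m" using dv by (simp add: outer_def)
  have Bc: "B \<in> carrier_mat m m" unfolding B_def by (rule minus_carrier_mat) (use Oc in simp)
  have Be: "\<And>i j. i < m \<Longrightarrow> j < m \<Longrightarrow> B$$(i,j) = X$$(i,j) - X$$(i,m) * X$$(j,m)"
  proof -
    fix i j assume ij: "i < m" "j < m"
    have "B$$(i,j) = Y$$(i,j) - 1/4*(d$i*d$j)" using Yc dv ij by (simp add: B_def outer_def)
    then show "B$$(i,j) = X$$(i,j) - X$$(i,m) * X$$(j,m)" using ij by (simp add: Ye dd algebra_simps)
  qed
  have BT: "B\<^sup>T = B"
    by (rule eq_matI) (use Bc Be in \<open>auto simp: Xs[of _ m] intro: Xs\<close>)
  have Bq: "u \<bullet> (B *\<^sub>v u) \<ge> 0" if u: "u \<in> carrier_vec m" for u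
  proof -
    define p where "p = (\<Sum>i<m. u$i * X$$(i,m))"
    define w where "w = vec (m+1) (\<lambda>k. if k < m then u$k else - p)"
    have wc: "w \<in> carrier_vec (m+1)" by (simp add: w_def)
    have "0 \<le> w \<bullet> (X *\<^sub>v w)" using X wc by (auto simp: ellX_def psd_def)
    also have "\<dots> = (\<Sum>i<m+1. \<Sum>j<m+1. (if i < m then u$i else - p) * X$$(i,j) * (if j < m then u$j else - p))"
      using quad_form[OF Xc wc] by (simp add: w_def)
    also have "\<dots> = (\<Sum>i<m. \<Sum>j<m. u$i * X$$(i,j) * u$j) - p * p"
    proof -
      have e1: "(\<Sum>j<m. X$$(m,j) * u$j) = p" unfolding p_def
        using Xs[of _ m] by (intro sum.cong) auto
      have e2: "(\<Sum>i<m. u$i * X$$(i,m)) = p" unfolding p_def ..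
      show ?thesis
        apply (subst split_quad[where w = "\<lambda>i. if i < m then u$i else - p" and f = "\<lambda>i j. X$$(i,j)"])
        using e1 e2 Xd[of m] by (simp cong: sum.cong_simp)
    qed
    also have "\<dots> = (\<Sum>i<m. \<Sum>j<m. u$i * B$$(i,j) * u$j)"
    proof -
      have "(\<Sum>i<m. \<Sum>j<m. u$i * B$$(i,j) * u$j) =
        (\<Sum>i<m. \<Sum>j<m. u$i * X$$(i,j) * u$j - (u$i*X$$(i,m)) * (u$j * X$$(j,m)))"
        by (intro sum.cong refl) (simp add: Be algebra_simps)
      also have "\<dots> = (\<Sum>i<m. \<Sum>j<m. u$i * X$$(i,j) * u$j) - p * p"
        by (simp add: sum_subtractf p_def sum_product)
      finally show ?thesis by simp
    qed
    also have "\<dots> = u \<bullet> (B *\<^sub>v u)" using quad_form[OF Bc u] by simp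
    finally show ?thesis .
  qed
  show ?thesis
    using Yc YT trY Bc BT Bq unfolding Let_def loewner_ge_def psd_def B_def d_def by auto
qed


lemma backward:
  assumes Yc: "Y \<in> carrier_mat m m" and YT: "Y\<^sup>T = Y" and trY: "tr Y = 1"
    and L: "loewner_ge m Y ((1/4) \<cdot>\<^sub>m (outer (diagv Y) (diagv Y)))"
  shows "Y \<in> (\<lambda>X. Mmat m * X * (Mmat m)\<^sup>T) ` (ellX m \<inter> hypH m)"
proof -
  define a where "a = (\<lambda>i. 1 - Y$$(i,i)/2)"
  define X where "X = mat (m+1) (m+1) (\<lambda>(i,j). if i<m \<and> j<m then Y$$(i,j) + a i + a j - 1
      else if i<m then a i else if j<m then a j else 1)"
  have Xc: "X \<in> carrier_mat (m+1) (m+1)" by (simp add: X_def)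
  have Ys: "\<And>i j. i < m \<Longrightarrow> j < m \<Longrightarrow> Y$$(j,i) = Y$$(i,j)"
    using YT Yc by (metis carrier_matD(1) carrier_matD(2) index_transpose_mat(1))
  have XT: "X\<^sup>T = X"
    by (rule eq_matI) (auto simp: X_def Ys)
  have Xd: "diagv X = vec (m+1) (\<lambda>_. 1)"
    by (rule eq_vecI) (auto simp: diagv_def X_def a_def)
  have MXM: "Mmat m * X * (Mmat m)\<^sup>T = Y"
  proof (rule eq_matI)
    fix i j assume ij: "i < dim_row Y" "j < dim_col Y"
    then show "(Mmat m * X * (Mmat m)\<^sup>T) $$ (i,j) = Y $$ (i,j)"
      using Yc MXM_entry[OF Xc, of i j] by (simp add: X_def)
  qed (use Yc in \<open>simp_all add: Mmat_def\<close>)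
  have Xpsd: "x \<bullet> (X *\<^sub>v x) \<ge> 0" if x: "x \<in> carrier_vec (m+1)" for x
  proof -
    define u where "u = vec m (\<lambda>i. x$i)"
    have uc: "u \<in> carrier_vec m" by (simp add: u_def)
    define d where "d = diagv Y"
    have dv: "dim_vec d = m" using Yc by (simp add: d_def diagv_def)
    have Oc: "outer d d \<in> carrier_mat m m" using dv by (simp add: outer_def)
    define B where "B = Y - (1/4) \<cdot>\<^sub>m (outer d d)"
    have Bc: "B \<in> carrier_mat m m" unfolding B_def by (rule minus_carrier_mat) (use Oc in simp)
    have Be: "B$$(i,j) = Y$$(i,j) - (1 - a i) * (1 - a j)" if ij: "i < m" "j < m" for i j
      using Yc dv ij by (simp add: B_def outer_def d_def diagv_def a_def)
    define QY where "QY = (\<Sum>i<m. \<Sum>j<m. x$i * Y$$(i,j) * x$j)"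
    define A where "A = (\<Sum>i<m. x$i * a i)"
    define S where "S = (\<Sum>i<m. x$i)"
    define t where "t = x$m"
    have "0 \<le> u \<bullet> (B *\<^sub>v u)" using L uc unfolding loewner_ge_def psd_def B_def d_def by blast
    also have "\<dots> = (\<Sum>i<m. \<Sum>j<m. x$i * B$$(i,j) * x$j)"
      using quad_form[OF Bc uc] by (simp add: u_def cong: sum.cong_simp)
    also have "\<dots> = (\<Sum>i<m. \<Sum>j<m. x$i * Y$$(i,j) * x$j - (x$i * (1 - a i)) * (x$j * (1 - a j)))"
      by (intro sum.cong refl) (simp add: Be algebra_simps)
    also have "\<dots> = QY - (S - A) * (S - A)"
    proof -
      have "S - A = (\<Sum>i<m. x$i * (1 - a i))"
        by (simp add: S_def A_def sum_subtractf algebra_simps)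
      then have "(S - A) * (S - A) = (\<Sum>i<m. \<Sum>j<m. (x$i * (1 - a i)) * (x$j * (1 - a j)))"
        by (simp add: sum_product)
      then show ?thesis by (simp add: sum_subtractf QY_def)
    qed
    finally have ineq: "0 \<le> QY - (S - A) * (S - A)" .
    have "x \<bullet> (X *\<^sub>v x) = (\<Sum>i<m+1. \<Sum>j<m+1. x$i * X$$(i,j) * x$j)"
      using quad_form[OF Xc x] .
    also have "\<dots> = (\<Sum>i<m. \<Sum>j<m. x$i * X$$(i,j) * x$j) + t * (\<Sum>i<m. x$i * X$$(i,m))
        + t * (\<Sum>j<m. X$$(m,j) * x$j) + t * X$$(m,m) * t"
      using split_quad[where w = "\<lambda>i. x$i" and f = "\<lambda>i j. X$$(i,j)"] by (simp add: t_def)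
    also have "\<dots> = (\<Sum>i<m. \<Sum>j<m. x$i * (Y$$(i,j) + a i + a j - 1) * x$j) + t * A + t * A + t * t"
      by (simp add: X_def A_def mult.commute cong: sum.cong_simp)
    also have "(\<Sum>i<m. \<Sum>j<m. x$i * (Y$$(i,j) + a i + a j - 1) * x$j) = QY + A * S + S * A - S * S"
    proof -
      have "(\<Sum>i<m. \<Sum>j<m. x$i * (Y$$(i,j) + a i + a j - 1) * x$j) =
        (\<Sum>i<m. \<Sum>j<m. x$i * Y$$(i,j) * x$j + (x$i * a i) * x$j + x$i * (x$j * a j) - x$i * x$j)"
        by (intro sum.cong refl) (simp add: algebra_simps)
      also have "\<dots> = QY + A * S + S * A - S * S"
        by (simp add: sum.distrib sum_subtractf sum_product QY_def A_def S_def)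
      finally show ?thesis .
    qed
    finally have "x \<bullet> (X *\<^sub>v x) = QY + A * S + S * A - S * S + t * A + t * A + t * t" .
    moreover have "0 \<le> (A + t) * (A + t)" by simp
    ultimately show ?thesis using ineq by (simp add: algebra_simps)
  qed
  have "X \<in> ellX m" using Xc XT Xd Xpsd by (simp add: ellX_def psd_def)
  moreover have "X \<in> hypH m" using Xc XT MXM trY by (simp add: hypH_def)
  ultimately show ?thesis using MXM by force
qed


theorem lemma6:
  fixes m :: nat
  shows "(\<lambda>X. Mmat m * X * (Mmat m)\<^sup>T) ` (ellX m \<inter> hypH m) =
    {Y. Y \<in> carrier_mat m m \<and> Y\<^sup>T = Y \<and> tr Y = 1 \<and>
        (let d = diagv Y in loewner_ge m Y ((1/4) \<cdot>\<^sub>m (outer d d)))}"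
proof
  show "(\<lambda>X. Mmat m * X * (Mmat m)\<^sup>T) ` (ellX m \<inter> hypH m) \<subseteq> {Y. Y \<in> carrier_mat m m \<and> Y\<^sup>T = Y \<and> tr Y = 1 \<and>
        (let d = diagv Y in loewner_ge m Y ((1/4) \<cdot>\<^sub>m (outer d d)))}"
    using forward by blast
  show "{Y. Y \<in> carrier_mat m m \<and> Y\<^sup>T = Y \<and> tr Y = 1 \<and>
        (let d = diagv Y in loewner_ge m Y ((1/4) \<cdot>\<^sub>m (outer d d)))} \<subseteq> (\<lambda>X. Mmat m * X * (Mmat m)\<^sup>T) ` (ellX m \<inter> hypH m)"
    using backward unfolding Let_def by blast
qed

end
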